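(* For every integer $k\geq 3$, there is a deterministic distributed dynamic data structure for $k$-clique membership listing which handles edge insertions and deletions in $O(1)$ amortized rounds.
   Context: Highly dynamic network model: a synchronous network on a fixed set $V$ of $n$ nodes with unique identifiers starts as the empty graph; at the beginning of round $i$ the graph is $G_i=(V,E_i)$, obtained from the previous graph by an adversary inserting and/or deleting an arbitrary (unbounded) set of edges. At the start of each round every node is notified only of the insertions/deletions of edges incident to it; then each node may send a message of $O(\log n)$ bits to each of its current neighbors. A distributed dynamic data structure consists of a local part $DS_v$ at each node $v$; at the end of every round, $DS_v$ may be queried and must answer immediately, without any further communication, either with a correct answer to the query or with $\texttt{inconsistent}$. The amortized round complexity is at most $c$ if for every round $i$, the number of rounds up to round $i$ in which at least one node $v$ has $DS_v$ in an inconsistent state, divided by the total number of topology changes that occurred up to round $i$, is at most $c$. $k$-clique membership listing: $DS_v$ at each node $v$ must respond at the end of round $i$ to a query consisting of a $k$-element node set $\{v_1,\dots,v_k\}$ containing $v$ with $\texttt{true}$ if it forms a $k$-clique in $G_i$, $\texttt{false}$ if it does not, or $\texttt{inconsistent}$. *)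

theory Defs
  imports Complex_Main
begin

text \<open>Model of the highly dynamic synchronous network on nodes V = {0..<n}
 (node identifiers are the numbers 0..n-1).
 A topology sequence E assigns to each round i the edge set E i of G_i; E 0 is the
 initial empty graph, round i (i >= 1) starts with graph E i.\<close>

definition valid_topology :: "nat \<Rightarrow> (nat \<Rightarrow> nat set set) \<Rightarrow> bool" where
  "valid_topology n E \<longleftrightarrow> E 0 = {} \<and>
     (\<forall>i. E i \<subseteq> {{u, v} | u v. u < n \<and> v < n \<and> u \<noteq> v})"

definition notif :: "(nat \<Rightarrow> nat set set) \<Rightarrow> nat \<Rightarrow> nat \<Rightarrow> nat set \<times> nat set" where
  "notif E i v = ({u. {u, v} \<in> E i - E (i - 1)}, {u. {u, v} \<in> E (i - 1) - E i})"

text \<open>The local state DS_v is a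
 value of type nat list (any finite local information can be encoded).  init v is the
 initial state of node v (it may depend on v's identifier); send_msg s nt u is the message
 (a bit string) sent to neighbour u given the local state s and the notification nt;
 update s nt rcv is the new local state given the messages received (rcv u = None iff u is not
 a current neighbour); answer s Q answers the query Q: Some b = true/false, None = inconsistent.\<close>
record alg =
  init :: "nat \<Rightarrow> nat list"
  send_msg :: "nat list \<Rightarrow> nat set \<times> nat set \<Rightarrow> nat \<Rightarrow> bool list"
  update :: "nat list \<Rightarrow> nat set \<times> nat set \<Rightarrow> (nat \<Rightarrow> bool list option) \<Rightarrow> nat list"
  answer :: "nat list \<Rightarrow> nat set \<Rightarrow> bool option"

fun run :: "alg \<Rightarrow> nat \<Rightarrow> (nat \<Rightarrow> nat set set) \<Rightarrow> nat \<Rightarrow> nat \<Rightarrow> nat list" where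
  "run A n E 0 v = init A v"
| "run A n E (Suc i) v =
     update A (run A n E i v) (notif E (Suc i) v)
       (\<lambda>u. if u < n \<and> {u, v} \<in> E (Suc i)
            then Some (send_msg A (run A n E i u) (notif E (Suc i) u) v) else None)"

definition msg_bounded :: "nat \<Rightarrow> nat \<Rightarrow> alg \<Rightarrow> bool" where
  "msg_bounded B n A \<longleftrightarrow>
     (\<forall>s nt u. length (send_msg A s nt u) \<le> B * nat \<lceil>log 2 (real n)\<rceil>)"

definition is_clique :: "nat set set \<Rightarrow> nat set \<Rightarrow> bool" where
  "is_clique F Q \<longleftrightarrow> (\<forall>u\<in>Q. \<forall>w\<in>Q. u \<noteq> w \<longrightarrow> {u, w} \<in> F)"

definition valid_query :: "nat \<Rightarrow> nat \<Rightarrow> nat \<Rightarrow> nat set \<Rightarrow> bool" where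
  "valid_query k n v Q \<longleftrightarrow> v < n \<and> v \<in> Q \<and> Q \<subseteq> {..<n} \<and> card Q = k"

definition clique_correct :: "nat \<Rightarrow> nat \<Rightarrow> alg \<Rightarrow> bool" where
  "clique_correct k n A \<longleftrightarrow>
     (\<forall>E. valid_topology n E \<longrightarrow>
        (\<forall>i v Q b. 1 \<le> i \<longrightarrow> valid_query k n v Q \<longrightarrow>
            answer A (run A n E i v) Q = Some b \<longrightarrow> b = is_clique (E i) Q))"

definition inconsistent_round :: "nat \<Rightarrow> nat \<Rightarrow> alg \<Rightarrow> (nat \<Rightarrow> nat set set) \<Rightarrow> nat \<Rightarrow> bool" where
  "inconsistent_round k n A E i \<longleftrightarrow>
     (\<exists>v Q. valid_query k n v Q \<and> answer A (run A n E i v) Q = None)"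

definition num_changes :: "(nat \<Rightarrow> nat set set) \<Rightarrow> nat \<Rightarrow> nat" where
  "num_changes E i = (\<Sum>j\<in>{1..i}. card ((E j - E (j - 1)) \<union> (E (j - 1) - E j)))"

definition amortized_bound :: "real \<Rightarrow> nat \<Rightarrow> nat \<Rightarrow> alg \<Rightarrow> bool" where
  "amortized_bound c k n A \<longleftrightarrow>
     (\<forall>E. valid_topology n E \<longrightarrow>
        (\<forall>i. real (card {j\<in>{1..i}. inconsistent_round k n A E j})
              \<le> c * real (num_changes E i)))"

end

theory Submission
  imports Defs "HOL-Library.Countable"
begin

section \<open>Message encoding\<close>

fun bits :: "nat \<Rightarrow> nat \<Rightarrow> bool list" where
  "bits 0 h = []"
| "bits (Suc w) h = odd h # bits w (h div 2)"

fun unbits :: "bool list \<Rightarrow> nat" where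
  "unbits [] = 0"
| "unbits (b # bs) = (if b then 1 else 0) + 2 * unbits bs"

lemma unbits_bits: "unbits (bits w h) = h mod 2 ^ w"
proof (induction w arbitrary: h)
  case 0
  then show ?case by simp
next
  case (Suc w)
  have "h mod 2 ^ Suc w = h mod (2 * 2 ^ w)" by simp
  also have "\<dots> = 2 * (h div 2 mod 2 ^ w) + h mod 2" by (rule mod_mult2_eq)
  finally show ?case using Suc by (auto simp: odd_iff_mod_2_eq_one)
qed

lemma length_bits [simp]: "length (bits w h) = w"
  by (induction w arbitrary: h) auto

type_synonym msg = "(nat \<times> bool) option \<times> bool \<times> bool option"

definition enc :: "nat \<Rightarrow> msg \<Rightarrow> bool list" where
  "enc w m = (case m of (it, mo, rp) \<Rightarrow>
     [it \<noteq> None, (case it of Some p \<Rightarrow> snd p | None \<Rightarrow> False), mo, rp \<noteq> None, rp = Some True]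
     @ bits w (case it of Some p \<Rightarrow> fst p | None \<Rightarrow> 0))"

definition dec :: "bool list \<Rightarrow> msg" where
  "dec bs = (if bs ! 0 then Some (unbits (drop 5 bs), bs ! 1) else None, bs ! 2,
             if bs ! 3 then Some (bs ! 4) else None)"

lemma length_enc: "length (enc w m) = 5 + w"
  by (cases m) (auto simp: enc_def)

lemma dec_enc:
  assumes "\<And>p. fst m = Some p \<Longrightarrow> fst p < 2 ^ w"
  shows "dec (enc w m) = m"
proof -
  obtain it mo rp where m: "m = (it, mo, rp)" by (cases m) auto
  show ?thesis
  proof (cases it)
    case None
    then show ?thesis using m by (cases rp) (auto simp: enc_def dec_def)
  next
    case (Some p)
    then have "fst p < 2 ^ w" using assms m by auto
    then show ?thesis using m Some
      by (cases rp; cases p) (auto simp: enc_def dec_def unbits_bits)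
  qed
qed

definition wd :: "nat \<Rightarrow> nat" where
  "wd n = nat \<lceil>log 2 (real n)\<rceil>"

lemma wd_bound:
  assumes "n \<ge> 1"
  shows "n \<le> 2 ^ wd n"
proof -
  have l0: "log 2 (real n) \<ge> 0" using assms by simp
  have "real n = 2 powr (log 2 (real n))" using assms by simp
  also have "\<dots> \<le> 2 powr (real_of_int \<lceil>log 2 (real n)\<rceil>)"
    by (intro powr_mono) auto
  also have "\<dots> = 2 powr (real (wd n))" using l0 by (simp add: wd_def)
  also have "\<dots> = real (2 ^ wd n)" by (simp add: powr_realpow)
  finally show ?thesis by linarith
qed

lemma wd_pos:
  assumes "n \<ge> 2"
  shows "wd n \<ge> 1"
proof -
  have "log 2 (real n) \<ge> 1" using assms by simp
  then show ?thesis unfolding wd_def by linarith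
qed


section \<open>Local algorithm\<close>

record lst =
  lnb :: "nat set"
  lq :: "nat set"
  lsnt :: "nat option"
  lkn :: "nat set \<Rightarrow> bool"
  lrc :: "nat \<Rightarrow> nat option"
  lok :: bool

definition linit :: lst where
  "linit = \<lparr>lnb = {}, lq = {}, lsnt = None, lkn = (\<lambda>e. False), lrc = (\<lambda>u. None), lok = True\<rparr>"

definition nI :: "nat \<Rightarrow> nat set \<times> nat set \<Rightarrow> nat set" where
  "nI n nt = fst nt \<inter> {..<n}"

definition nD :: "nat \<Rightarrow> nat set \<times> nat set \<Rightarrow> nat set" where
  "nD n nt = snd nt \<inter> {..<n}"

definition newN :: "nat \<Rightarrow> lst \<Rightarrow> nat set \<times> nat set \<Rightarrow> nat set" where
  "newN n st nt = (lnb st - nD n nt) \<union> nI n nt"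

definition newQ :: "nat \<Rightarrow> lst \<Rightarrow> nat set \<times> nat set \<Rightarrow> nat set" where
  "newQ n st nt = lq st \<union> nI n nt \<union> nD n nt"

definition hdq :: "nat set \<Rightarrow> nat" where
  "hdq Qs = (LEAST h. h \<in> Qs)"

definition item :: "nat \<Rightarrow> lst \<Rightarrow> nat set \<times> nat set \<Rightarrow> nat option" where
  "item n st nt = (if newQ n st nt = {} then None else Some (hdq (newQ n st nt)))"

definition mstruct :: "nat \<Rightarrow> lst \<Rightarrow> nat set \<times> nat set \<Rightarrow> nat \<Rightarrow> msg" where
  "mstruct n st nt v =
     (map_option (\<lambda>h. (h, h \<in> newN n st nt)) (item n st nt),
      newQ n st nt - {hdq (newQ n st nt)} \<noteq> {},
      map_option (\<lambda>w. w \<in> newN n st nt) (lrc st v))"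

definition upd :: "lst \<Rightarrow> (nat \<Rightarrow> msg option) \<Rightarrow> nat set \<Rightarrow> bool \<Rightarrow> bool" where
  "upd st msgs e s \<longleftrightarrow> (\<exists>u m. msgs u = Some m \<and>
      ((\<exists>h. fst m = Some (h, s) \<and> e = {u, h}) \<or>
       (\<exists>w. lsnt st = Some w \<and> snd (snd m) = Some s \<and> e = {u, w})))"

definition lstep_abs :: "nat \<Rightarrow> nat set \<times> nat set \<Rightarrow> (nat \<Rightarrow> msg option) \<Rightarrow> lst \<Rightarrow> lst" where
  "lstep_abs n nt msgs st =
     \<lparr>lnb = newN n st nt,
      lq = newQ n st nt - {hdq (newQ n st nt)},
      lsnt = item n st nt,
      lkn = (\<lambda>e. if (\<exists>s. upd st msgs e s) then (SOME s. upd st msgs e s) else lkn st e),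
      lrc = (\<lambda>u. Option.bind (msgs u) (\<lambda>m. map_option fst (fst m))),
      lok = (newQ n st nt = {} \<and> (\<forall>u\<in>newN n st nt. \<exists>m. msgs u = Some m \<and> \<not> fst (snd m)))\<rparr>"

definition ans :: "nat \<Rightarrow> lst \<Rightarrow> nat set \<Rightarrow> bool option" where
  "ans x st Q = (if lok st then Some (\<forall>u\<in>Q. \<forall>w\<in>Q. u \<noteq> w \<longrightarrow>
      (if u = x then w \<in> lnb st else if w = x then u \<in> lnb st
       else u \<in> lnb st \<and> w \<in> lnb st \<and> lkn st {u, w})) else None)"

type_synonym obs = "nat list \<times> nat list \<times> bool list option list"

definition mkobs :: "nat \<Rightarrow> nat set \<times> nat set \<Rightarrow> (nat \<Rightarrow> bool list option) \<Rightarrow> obs" where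
  "mkobs n nt r = (filter (\<lambda>u. u \<in> fst nt) [0..<n], filter (\<lambda>u. u \<in> snd nt) [0..<n], map r [0..<n])"

definition lstep :: "nat \<Rightarrow> obs \<Rightarrow> lst \<Rightarrow> lst" where
  "lstep n ob st = (case ob of (Il, Dl, rl) \<Rightarrow>
     lstep_abs n (set Il, set Dl) (\<lambda>u. if u < n then map_option dec (rl ! u) else None) st)"

definition view :: "nat \<Rightarrow> obs list \<Rightarrow> lst" where
  "view n hs = foldl (\<lambda>st ob. lstep n ob st) linit hs"

definition Alg :: "nat \<Rightarrow> alg" where
  "Alg n = \<lparr>init = (\<lambda>v. [v, to_nat ([] :: obs list)]),
     send_msg = (\<lambda>s nt u. enc (wd n) (mstruct n (view n (from_nat (s ! 1))) nt u)),
     update = (\<lambda>s nt r. [s ! 0, to_nat ((from_nat (s ! 1) :: obs list) @ [mkobs n nt r])]),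
     answer = (\<lambda>s Q. ans (s ! 0) (view n (from_nat (s ! 1))) Q)\<rparr>"

lemma Alg_init [simp]: "init (Alg n) v = [v, to_nat ([] :: obs list)]"
  by (simp add: Alg_def)
lemma Alg_send [simp]: "send_msg (Alg n) s nt u = enc (wd n) (mstruct n (view n (from_nat (s ! 1))) nt u)"
  by (simp add: Alg_def)
lemma Alg_update [simp]: "update (Alg n) s nt r = [s ! 0, to_nat ((from_nat (s ! 1) :: obs list) @ [mkobs n nt r])]"
  by (simp add: Alg_def)
lemma Alg_answer [simp]: "answer (Alg n) s Q = ans (s ! 0) (view n (from_nat (s ! 1))) Q"
  by (simp add: Alg_def)

fun S :: "nat \<Rightarrow> (nat \<Rightarrow> nat set set) \<Rightarrow> nat \<Rightarrow> nat \<Rightarrow> lst" where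
  "S n E 0 v = linit"
| "S n E (Suc t) v = lstep_abs n (notif E (Suc t) v)
     (\<lambda>u. if u < n \<and> {u, v} \<in> E (Suc t)
          then Some (mstruct n (S n E t u) (notif E (Suc t) u) v) else None) (S n E t v)"

definition msgs :: "nat \<Rightarrow> (nat \<Rightarrow> nat set set) \<Rightarrow> nat \<Rightarrow> nat \<Rightarrow> nat \<Rightarrow> msg option" where
  "msgs n E t v = (\<lambda>u. if u < n \<and> {u, v} \<in> E (Suc t)
          then Some (mstruct n (S n E t u) (notif E (Suc t) u) v) else None)"

lemma S_Suc: "S n E (Suc t) v = lstep_abs n (notif E (Suc t) v) (msgs n E t v) (S n E t v)"
  by (simp add: msgs_def)

declare S.simps(2) [simp del]

lemma lq_bound: "lq (S n E t v) \<subseteq> {..<n}"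
  by (induction t arbitrary: v)
     (auto simp: S_Suc linit_def lstep_abs_def newQ_def nI_def nD_def)

lemma hdq_in: "Qs \<noteq> {} \<Longrightarrow> hdq Qs \<in> Qs"
  unfolding hdq_def by (metis LeastI ex_in_conv)

lemma item_bound: "lq st \<subseteq> {..<n} \<Longrightarrow> item n st nt = Some h \<Longrightarrow> h < n"
  using hdq_in[of "newQ n st nt"]
  by (auto simp: item_def newQ_def nI_def nD_def split: if_splits)

lemma lstep_abs_norm:
  "lstep_abs n (I \<inter> {..<n}, D \<inter> {..<n}) msgs' st = lstep_abs n (I, D) msgs' st"
  by (simp add: lstep_abs_def newN_def newQ_def nI_def nD_def item_def Int_assoc)

lemma sim:
  assumes n: "n \<ge> 1"
  shows "\<exists>hs. run (Alg n) n E t v = [v, to_nat hs] \<and> view n hs = S n E t v"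
proof (induction t arbitrary: v)
  case 0
  then show ?case by (auto simp: Alg_def view_def)
next
  case (Suc t)
  from Suc obtain H where H: "\<And>v. run (Alg n) n E t v = [v, to_nat (H v)] \<and> view n (H v) = S n E t v"
    by metis
  define r where "r = (\<lambda>u. if u < n \<and> {u, v} \<in> E (Suc t)
            then Some (send_msg (Alg n) (run (Alg n) n E t u) (notif E (Suc t) u) v) else None)"
  have run: "run (Alg n) n E (Suc t) v = [v, to_nat (H v @ [mkobs n (notif E (Suc t) v) r])]"
    using H[of v] by (simp add: r_def)
  have r: "r u = (if u < n \<and> {u, v} \<in> E (Suc t)
            then Some (enc (wd n) (mstruct n (S n E t u) (notif E (Suc t) u) v)) else None)" for u
    using H[of u] by (simp add: r_def)
  have dm: "(\<lambda>u. if u < n then map_option dec (map r [0..<n] ! u) else None) = msgs n E t v"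
  proof
    fix u
    show "(if u < n then map_option dec (map r [0..<n] ! u) else None) = msgs n E t v u"
    proof (cases "u < n \<and> {u, v} \<in> E (Suc t)")
      case True
      have "dec (enc (wd n) (mstruct n (S n E t u) (notif E (Suc t) u) v))
            = mstruct n (S n E t u) (notif E (Suc t) u) v"
      proof (rule dec_enc)
        fix p assume "fst (mstruct n (S n E t u) (notif E (Suc t) u) v) = Some p"
        then obtain h where "item n (S n E t u) (notif E (Suc t) u) = Some h" "fst p = h"
          by (auto simp: mstruct_def)
        then have "fst p < n" using item_bound[OF lq_bound] by blast
        then show "fst p < 2 ^ wd n" using wd_bound[OF n] by linarith
      qed
      then show ?thesis using True by (simp add: r msgs_def)
    next
      case False
      then show ?thesis by (auto simp: r msgs_def)
    qed
  qed
  have "view n (H v @ [mkobs n (notif E (Suc t) v) r]) = lstep n (mkobs n (notif E (Suc t) v) r) (S n E t v)"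
    using H[of v] by (simp add: view_def)
  also have "\<dots> = lstep_abs n (fst (notif E (Suc t) v) \<inter> {..<n}, snd (notif E (Suc t) v) \<inter> {..<n}) (msgs n E t v) (S n E t v)"
  proof -
    have "set (filter (\<lambda>u. u \<in> X) [0..<n]) = X \<inter> {..<n}" for X by auto
    then show ?thesis unfolding lstep_def mkobs_def using dm by simp
  qed
  also have "\<dots> = S n E (Suc t) v"
    by (cases "notif E (Suc t) v") (simp add: lstep_abs_norm S_Suc)
  finally show ?case using run by blast
qed


section \<open>Semantic invariants\<close>

definition Nb :: "(nat \<Rightarrow> nat set set) \<Rightarrow> nat \<Rightarrow> nat \<Rightarrow> nat set" where
  "Nb E t x = {u. {u, x} \<in> E t}"

definition Qp :: "nat \<Rightarrow> (nat \<Rightarrow> nat set set) \<Rightarrow> nat \<Rightarrow> nat \<Rightarrow> nat set" where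
  "Qp n E t y = newQ n (S n E t y) (notif E (Suc t) y)"

context
  fixes n :: nat and E :: "nat \<Rightarrow> nat set set"
  assumes vt: "valid_topology n E"
begin

lemma edge_lt: "{u, x} \<in> E t \<Longrightarrow> u < n \<and> x < n \<and> u \<noteq> x"
proof -
  assume "{u, x} \<in> E t"
  then obtain a b where "{u, x} = {a, b}" "a < n" "b < n" "a \<noteq> b"
    using vt unfolding valid_topology_def by blast
  then show ?thesis by (auto simp: doubleton_eq_iff)
qed

lemma E0: "E 0 = {}"
  using vt unfolding valid_topology_def by blast

lemma nb_S: "lnb (S n E t x) = Nb E t x"
proof (induction t arbitrary: x)
  case 0
  then show ?case by (simp add: linit_def Nb_def E0)
next
  case (Suc t)
  show ?case
    unfolding S_Suc lstep_abs_def using Suc[of x]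
    by (auto simp: newN_def nI_def nD_def notif_def Nb_def dest: edge_lt)
qed

lemma lq_Suc: "lq (S n E (Suc t) y) = Qp n E t y - {hdq (Qp n E t y)}"
  by (simp add: S_Suc lstep_abs_def Qp_def)

lemma lsnt_Suc: "lsnt (S n E (Suc t) y) = (if Qp n E t y = {} then None else Some (hdq (Qp n E t y)))"
  by (simp add: S_Suc lstep_abs_def Qp_def item_def)

lemma inQp: "z \<in> Qp n E t y \<Longrightarrow> z \<in> lq (S n E (Suc t) y) \<or> lsnt (S n E (Suc t) y) = Some z"
  by (auto simp: lq_Suc lsnt_Suc)

lemma Qp_lq: "lq (S n E t y) \<subseteq> Qp n E t y"
  by (auto simp: Qp_def newQ_def)

lemma Qp_change: "({z, y} \<in> E (Suc t)) \<noteq> ({z, y} \<in> E t) \<Longrightarrow> z \<in> Qp n E t y"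
  by (auto simp: Qp_def newQ_def nI_def nD_def notif_def dest: edge_lt)

lemma lrc_Suc: "lrc (S n E (Suc t) x) u = (if u < n \<and> {u, x} \<in> E (Suc t) then lsnt (S n E (Suc t) u) else None)"
  by (simp add: S_Suc lstep_abs_def msgs_def mstruct_def option.map_comp o_def option.map_ident)

lemma lkn_Suc: "lkn (S n E (Suc t) x) e =
   (if (\<exists>s. upd (S n E t x) (msgs n E t x) e s) then (SOME s. upd (S n E t x) (msgs n E t x) e s)
    else lkn (S n E t x) e)"
  by (simp add: S_Suc lstep_abs_def)

lemma lnb_Suc_newN: "newN n (S n E t u) (notif E (Suc t) u) = Nb E (Suc t) u"
  using nb_S[of "Suc t" u] by (simp add: S_Suc lstep_abs_def)

lemma upd_val:
  assumes "upd (S n E t x) (msgs n E t x) e s"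
  shows "s = (e \<in> E (Suc t))"
proof -
  from assms obtain u m where m: "msgs n E t x u = Some m" and
    c: "(\<exists>h. fst m = Some (h, s) \<and> e = {u, h}) \<or>
       (\<exists>w. lsnt (S n E t x) = Some w \<and> snd (snd m) = Some s \<and> e = {u, w})"
    unfolding upd_def by blast
  from m have ux: "u < n" "{u, x} \<in> E (Suc t)" and
    mdef: "m = mstruct n (S n E t u) (notif E (Suc t) u) x"
    by (auto simp: msgs_def split: if_splits)
  from c show ?thesis
  proof
    assume "\<exists>h. fst m = Some (h, s) \<and> e = {u, h}"
    then obtain h where "fst m = Some (h, s)" "e = {u, h}" by blast
    then show ?thesis using mdef lnb_Suc_newN[of t u]
      by (auto simp: mstruct_def Nb_def insert_commute)
  next
    assume "\<exists>w. lsnt (S n E t x) = Some w \<and> snd (snd m) = Some s \<and> e = {u, w}"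
    then obtain w where w: "lsnt (S n E t x) = Some w" "snd (snd m) = Some s" "e = {u, w}" by blast
    then obtain w' where w': "lrc (S n E t u) x = Some w'" "s = (w' \<in> newN n (S n E t u) (notif E (Suc t) u))"
      using mdef by (auto simp: mstruct_def)
    have "w' = w"
    proof (cases t)
      case 0
      then show ?thesis using w' by (simp add: linit_def)
    next
      case (Suc t')
      then show ?thesis using w' w lrc_Suc[of t' u x] by (auto split: if_splits)
    qed
    then show ?thesis using w' w lnb_Suc_newN[of t u]
      by (auto simp: Nb_def insert_commute)
  qed
qed

lemma lkn_fix: "\<exists>s. upd (S n E t x) (msgs n E t x) e s \<Longrightarrow> lkn (S n E (Suc t) x) e = (e \<in> E (Suc t))"
proof -
  assume a: "\<exists>s. upd (S n E t x) (msgs n E t x) e s"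
  then have "upd (S n E t x) (msgs n E t x) e (SOME s. upd (S n E t x) (msgs n E t x) e s)"
    by (rule someI_ex)
  then show ?thesis unfolding lkn_Suc using a upd_val by simp
qed

lemma item_upd:
  assumes "u < n" "{u, x} \<in> E (Suc t)" "lsnt (S n E (Suc t) u) = Some v"
  shows "\<exists>s. upd (S n E t x) (msgs n E t x) {u, v} s"
proof -
  have "item n (S n E t u) (notif E (Suc t) u) = Some v"
    using assms(3) by (simp add: S_Suc lstep_abs_def)
  then show ?thesis using assms(1,2)
    unfolding upd_def msgs_def mstruct_def by auto
qed

lemma reply_upd:
  assumes "{v, x} \<in> E (Suc t)" "{x, v} \<in> E t" "lsnt (S n E t x) = Some u"
  shows "\<exists>s. upd (S n E t x) (msgs n E t x) {v, u} s"
proof (cases t)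
  case 0
  then show ?thesis using assms(3) by (simp add: linit_def)
next
  case (Suc t')
  have "lrc (S n E t v) x = Some u"
    using lrc_Suc[of t' v x] assms edge_lt[OF assms(2)] Suc by auto
  moreover have "v < n" using edge_lt[OF assms(1)] by simp
  ultimately show ?thesis using assms(1,3)
    unfolding upd_def msgs_def mstruct_def by auto
qed


definition Jinv :: "nat \<Rightarrow> nat \<Rightarrow> nat \<Rightarrow> nat \<Rightarrow> bool" where
  "Jinv t x u v \<longleftrightarrow> lkn (S n E t x) {u, v} = ({u, v} \<in> E t) \<or> v \<in> lq (S n E t u) \<or>
     u \<in> lq (S n E t v) \<or> u \<in> lq (S n E t x) \<or> lsnt (S n E t x) = Some u \<or>
     v \<in> lq (S n E t x) \<or> lsnt (S n E t x) = Some v"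

lemma J: "u \<in> Nb E t x \<Longrightarrow> v \<in> Nb E t x \<Longrightarrow> u \<noteq> v \<Longrightarrow> Jinv t x u v"
proof (induction t arbitrary: x u v)
  case 0
  then show ?case by (simp add: Nb_def E0)
next
  case (Suc t)
  have ux: "{u, x} \<in> E (Suc t)" and vx: "{v, x} \<in> E (Suc t)" using Suc.prems by (auto simp: Nb_def)
  have un: "u < n" and vn: "v < n" using edge_lt[OF ux] edge_lt[OF vx] by auto
  have fixit: "Jinv (Suc t) x u v" if "\<exists>s. upd (S n E t x) (msgs n E t x) {u, v} s"
    using lkn_fix[OF that] unfolding Jinv_def by simp
  have fixit2: "Jinv (Suc t) x u v" if "\<exists>s. upd (S n E t x) (msgs n E t x) {v, u} s"
    using fixit that by (simp add: insert_commute)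
  show ?case
  proof (cases "{u, x} \<in> E t")
    case False
    then have "u \<in> Qp n E t x" using ux by (intro Qp_change) auto
    then show ?thesis using inQp unfolding Jinv_def by blast
  next
    case uxt: True
    show ?thesis
    proof (cases "{v, x} \<in> E t")
      case False
      then have "v \<in> Qp n E t x" using vx by (intro Qp_change) auto
      then show ?thesis using inQp unfolding Jinv_def by blast
    next
      case vxt: True
      have viaU: "Jinv (Suc t) x u v" if "v \<in> Qp n E t u"
        using inQp[OF that]
      proof
        assume "v \<in> lq (S n E (Suc t) u)" then show ?thesis unfolding Jinv_def by blast
      next
        assume "lsnt (S n E (Suc t) u) = Some v"
        then show ?thesis using item_upd[OF un ux] fixit by blast
      qed
      have viaV: "Jinv (Suc t) x u v" if "u \<in> Qp n E t v"
        using inQp[OF that]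
      proof
        assume "u \<in> lq (S n E (Suc t) v)" then show ?thesis unfolding Jinv_def by blast
      next
        assume "lsnt (S n E (Suc t) v) = Some u"
        then show ?thesis using item_upd[OF vn vx] fixit2 by blast
      qed
      have viaX: "Jinv (Suc t) x u v" if "u \<in> Qp n E t x \<or> v \<in> Qp n E t x"
        using that inQp unfolding Jinv_def by blast
      show ?thesis
      proof (cases "({u, v} \<in> E (Suc t)) = ({u, v} \<in> E t)")
        case False
        then have "v \<in> Qp n E t u" by (intro Qp_change) (simp add: insert_commute)
        then show ?thesis by (rule viaU)
      next
        case same: True
        have "Jinv t x u v" using Suc.IH[of u x v] Suc.prems uxt vxt by (simp add: Nb_def)
        then consider
            "lkn (S n E t x) {u, v} = ({u, v} \<in> E t)" | "v \<in> lq (S n E t u)" |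
            "u \<in> lq (S n E t v)" | "u \<in> lq (S n E t x)" | "lsnt (S n E t x) = Some u" |
            "v \<in> lq (S n E t x)" | "lsnt (S n E t x) = Some v"
          unfolding Jinv_def by blast
        then show ?thesis
        proof cases
          case 1
          then show ?thesis using lkn_Suc[of t x "{u, v}"] fixit same
            unfolding Jinv_def by (auto split: if_splits)
        next
          case 2 then show ?thesis using viaU Qp_lq by blast
        next
          case 3 then show ?thesis using viaV Qp_lq by blast
        next
          case 4 then show ?thesis using viaX Qp_lq by blast
        next
          case 5
          have "{x, v} \<in> E t" using vxt by (simp add: insert_commute)
          then show ?thesis using reply_upd[OF vx _ 5] fixit2 by blast
        next
          case 6 then show ?thesis using viaX Qp_lq by blast
        next
          case 7
          have "{x, u} \<in> E t" using uxt by (simp add: insert_commute)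
          then have "\<exists>s. upd (S n E t x) (msgs n E t x) {u, v} s" using reply_upd[OF ux _ 7] by blast
          then show ?thesis by (rule fixit)
        qed
      qed
    qed
  qed
qed


lemma more_msg: "u \<in> Nb E (Suc t) x \<Longrightarrow>
   msgs n E t x u = Some (mstruct n (S n E t u) (notif E (Suc t) u) x) \<and>
   fst (snd (mstruct n (S n E t u) (notif E (Suc t) u) x)) = (lq (S n E (Suc t) u) \<noteq> {})"
  using edge_lt[of u x "Suc t"]
  by (auto simp: Nb_def msgs_def mstruct_def lq_Suc Qp_def)

lemma lok_Suc: "lok (S n E (Suc t) x) \<longleftrightarrow>
    (Qp n E t x = {} \<and> (\<forall>u\<in>Nb E (Suc t) x. lq (S n E (Suc t) u) = {}))"
proof -
  have "lok (S n E (Suc t) x) \<longleftrightarrow> (Qp n E t x = {} \<and>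
      (\<forall>u\<in>Nb E (Suc t) x. \<exists>m. msgs n E t x u = Some m \<and> \<not> fst (snd m)))"
    using lnb_Suc_newN[of t x] by (simp add: S_Suc lstep_abs_def Qp_def)
  also have "\<dots> \<longleftrightarrow> (Qp n E t x = {} \<and> (\<forall>u\<in>Nb E (Suc t) x. lq (S n E (Suc t) u) = {}))"
    using more_msg by auto
  finally show ?thesis .
qed

lemma ans_correct:
  assumes "x \<in> Q" "lok (S n E (Suc t) x)"
  shows "ans x (S n E (Suc t) x) Q = Some (is_clique (E (Suc t)) Q)"
proof -
  let ?st = "S n E (Suc t) x"
  have q0: "lq ?st = {}" "lsnt ?st = None" and qu: "\<And>u. u \<in> Nb E (Suc t) x \<Longrightarrow> lq (S n E (Suc t) u) = {}"
    using assms(2) unfolding lok_Suc by (auto simp: lq_Suc lsnt_Suc)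
  have kn: "lkn ?st {u, w} = ({u, w} \<in> E (Suc t))"
    if "u \<in> Nb E (Suc t) x" "w \<in> Nb E (Suc t) x" "u \<noteq> w" for u w
    using J[OF that] q0 qu[OF that(1)] qu[OF that(2)] unfolding Jinv_def by auto
  have nb: "lnb ?st = Nb E (Suc t) x" by (rule nb_S)
  have "(\<forall>u\<in>Q. \<forall>w\<in>Q. u \<noteq> w \<longrightarrow>
      (if u = x then w \<in> lnb ?st else if w = x then u \<in> lnb ?st
       else u \<in> lnb ?st \<and> w \<in> lnb ?st \<and> lkn ?st {u, w})) = is_clique (E (Suc t)) Q"
  proof
    assume L: "\<forall>u\<in>Q. \<forall>w\<in>Q. u \<noteq> w \<longrightarrow>
      (if u = x then w \<in> lnb ?st else if w = x then u \<in> lnb ?st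
       else u \<in> lnb ?st \<and> w \<in> lnb ?st \<and> lkn ?st {u, w})"
    show "is_clique (E (Suc t)) Q"
      unfolding is_clique_def
    proof (intro ballI impI)
      fix u w assume uw: "u \<in> Q" "w \<in> Q" "u \<noteq> w"
      show "{u, w} \<in> E (Suc t)"
        using L[rule_format, OF uw] kn[of u w] uw(3) unfolding nb
        by (auto simp: Nb_def insert_commute split: if_splits)
    qed
  next
    assume C: "is_clique (E (Suc t)) Q"
    have inN: "u \<in> Nb E (Suc t) x" if "u \<in> Q" "u \<noteq> x" for u
      using C assms(1) that unfolding is_clique_def Nb_def by auto
    show "\<forall>u\<in>Q. \<forall>w\<in>Q. u \<noteq> w \<longrightarrow>
      (if u = x then w \<in> lnb ?st else if w = x then u \<in> lnb ?st
       else u \<in> lnb ?st \<and> w \<in> lnb ?st \<and> lkn ?st {u, w})"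
      using C inN kn unfolding nb is_clique_def by auto
  qed
  then show ?thesis using assms(2) by (simp add: ans_def)
qed

lemma not_ok: "\<not> lok (S n E (Suc t) x) \<Longrightarrow> x < n \<Longrightarrow> \<exists>y<n. Qp n E t y \<noteq> {}"
proof -
  assume a: "\<not> lok (S n E (Suc t) x)" "x < n"
  show ?thesis
  proof (cases "Qp n E t x = {}")
    case False then show ?thesis using a(2) by blast
  next
    case True
    then obtain u where u: "u \<in> Nb E (Suc t) x" "lq (S n E (Suc t) u) \<noteq> {}"
      using a(1) lok_Suc by blast
    have "u < n" using u(1) edge_lt by (auto simp: Nb_def)
    moreover have "Qp n E t u \<noteq> {}" using u(2) by (auto simp: lq_Suc)
    ultimately show ?thesis by blast
  qed
qed

section \<open>Amortization\<close>

definition Dl :: "nat \<Rightarrow> nat set set" where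
  "Dl j = (E j - E (j - 1)) \<union> (E (j - 1) - E j)"

definition Phi :: "nat \<Rightarrow> nat" where
  "Phi t = (\<Sum>y<n. card (lq (S n E t y)))"

lemma finite_edges: "finite (E t)"
proof -
  have "E t \<subseteq> (\<lambda>(u, v). {u, v}) ` ({..<n} \<times> {..<n})"
    using vt unfolding valid_topology_def by fastforce
  then show ?thesis by (rule finite_subset) auto
qed

lemma finite_Dl: "finite (Dl j)"
  unfolding Dl_def using finite_edges by auto

lemma Qp_fin: "finite (Qp n E t y)"
proof -
  have "Qp n E t y \<subseteq> {..<n}" using lq_bound[of n E t y]
    by (auto simp: Qp_def newQ_def nI_def nD_def)
  then show ?thesis by (rule finite_subset) auto
qed

definition Cs :: "nat \<Rightarrow> nat \<Rightarrow> nat set" where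
  "Cs t y = {u. u < n \<and> {u, y} \<in> Dl (Suc t)}"

lemma card_step: "card (lq (S n E (Suc t) y)) + (if Qp n E t y \<noteq> {} then 1 else 0) = card (Qp n E t y)"
proof (cases "Qp n E t y = {}")
  case True then show ?thesis by (simp add: lq_Suc)
next
  case False
  have h: "hdq (Qp n E t y) \<in> Qp n E t y" using False by (rule hdq_in)
  have c: "card (Qp n E t y) > 0" using False Qp_fin[of t y] by (simp add: card_gt_0_iff)
  have "card (lq (S n E (Suc t) y)) = card (Qp n E t y) - 1"
    unfolding lq_Suc using h Qp_fin[of t y] by (simp add: card_Diff_singleton)
  then show ?thesis using False c by simp
qed

lemma card_Qp: "card (Qp n E t y) \<le> card (lq (S n E t y)) + card (Cs t y)"
proof -
  have "Qp n E t y = lq (S n E t y) \<union> Cs t y"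
    by (auto simp: Qp_def newQ_def nI_def nD_def notif_def Cs_def Dl_def)
  then show ?thesis by (simp add: card_Un_le)
qed

lemma double_count: "(\<Sum>y<n. card (Cs t y)) \<le> 2 * card (Dl (Suc t))"
proof -
  have fin: "finite (Cs t y)" for y unfolding Cs_def by auto
  have "(\<Sum>y<n. card (Cs t y)) = card (SIGMA y:{..<n}. Cs t y)"
    using fin by (simp add: card_SigmaI)
  also have "\<dots> \<le> card (Dl (Suc t) \<times> (UNIV :: bool set))"
  proof (rule card_inj_on_le)
    show "inj_on (\<lambda>(y, u). ({u, y}, y < u)) (SIGMA y:{..<n}. Cs t y)"
      by (auto simp: inj_on_def doubleton_eq_iff)
    show "(\<lambda>(y, u). ({u, y}, y < u)) ` (SIGMA y:{..<n}. Cs t y) \<subseteq> Dl (Suc t) \<times> UNIV"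
      by (auto simp: Cs_def)
    show "finite (Dl (Suc t) \<times> (UNIV :: bool set))" using finite_Dl by simp
  qed
  also have "\<dots> = 2 * card (Dl (Suc t))" by (simp add: card_cartesian_product)
  finally show ?thesis .
qed

lemma Phi_step: "Phi (Suc t) + (if \<exists>y<n. Qp n E t y \<noteq> {} then 1 else 0) \<le> Phi t + 2 * card (Dl (Suc t))"
proof -
  have "(if \<exists>y<n. Qp n E t y \<noteq> {} then 1 else 0) \<le> (\<Sum>y<n. (if Qp n E t y \<noteq> {} then 1 else 0::nat))"
  proof (cases "\<exists>y<n. Qp n E t y \<noteq> {}")
    case True
    then obtain y where "y < n" "Qp n E t y \<noteq> {}" by blast
    then have "(if Qp n E t y \<noteq> {} then 1 else 0::nat) \<le> (\<Sum>y<n. (if Qp n E t y \<noteq> {} then 1 else 0::nat))"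
      by (intro member_le_sum) auto
    then show ?thesis using True \<open>Qp n E t y \<noteq> {}\<close> by simp
  qed simp
  then have "Phi (Suc t) + (if \<exists>y<n. Qp n E t y \<noteq> {} then 1 else 0)
      \<le> (\<Sum>y<n. card (lq (S n E (Suc t) y)) + (if Qp n E t y \<noteq> {} then 1 else 0))"
    unfolding Phi_def by (simp add: sum.distrib)
  also have "\<dots> = (\<Sum>y<n. card (Qp n E t y))" using card_step by simp
  also have "\<dots> \<le> (\<Sum>y<n. card (lq (S n E t y)) + card (Cs t y))" by (intro sum_mono card_Qp)
  also have "\<dots> = Phi t + (\<Sum>y<n. card (Cs t y))" unfolding Phi_def by (simp add: sum.distrib)
  also have "\<dots> \<le> Phi t + 2 * card (Dl (Suc t))" using double_count by simp
  finally show ?thesis .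
qed

lemma amort:
  assumes P: "\<And>t. P (Suc t) \<Longrightarrow> \<exists>y<n. Qp n E t y \<noteq> {}"
  shows "card {j\<in>{1..i}. P j} + Phi i \<le> 2 * num_changes E i"
proof (induction i)
  case 0
  then show ?case by (simp add: Phi_def linit_def num_changes_def)
next
  case (Suc i)
  have nc: "num_changes E (Suc i) = num_changes E i + card (Dl (Suc i))"
    by (simp add: num_changes_def Dl_def)
  have fin: "finite {j\<in>{1..i}. P j}" by auto
  have set: "{j\<in>{1..Suc i}. P j} = {j\<in>{1..i}. P j} \<union> (if P (Suc i) then {Suc i} else {})"
    by (auto simp: le_Suc_eq)
  have "card {j\<in>{1..Suc i}. P j} = card {j\<in>{1..i}. P j} + (if P (Suc i) then 1 else 0)"
    unfolding set using fin by auto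
  moreover have "(if P (Suc i) then 1 else 0) \<le> (if \<exists>y<n. Qp n E i y \<noteq> {} then 1 else (0::nat))"
    using P[of i] by auto
  ultimately show ?case using Phi_step[of i] Suc.IH nc by linarith
qed

end


definition A0 :: alg where
  "A0 = \<lparr>init = (\<lambda>v. []), send_msg = (\<lambda>s nt u. []), update = (\<lambda>s nt r. []), answer = (\<lambda>s Q. None)\<rparr>"

lemma small_n:
  assumes "k \<ge> 3" "n \<le> 1"
  shows "msg_bounded 6 n A0 \<and> clique_correct k n A0 \<and> amortized_bound 2 k n A0"
proof -
  have nq: "\<not> valid_query k n v Q" for v Q
  proof
    assume "valid_query k n v Q"
    then have "Q \<subseteq> {..<n}" "card Q = k" by (auto simp: valid_query_def)
    then have "k \<le> n" using card_mono[of "{..<n}" Q] by auto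
    then show False using assms by simp
  qed
  show ?thesis
    using nq by (auto simp: msg_bounded_def clique_correct_def amortized_bound_def
        inconsistent_round_def A0_def)
qed

lemma big_n:
  assumes "n \<ge> 2"
  shows "msg_bounded 6 n (Alg n) \<and> clique_correct k n (Alg n) \<and> amortized_bound 2 k n (Alg n)"
proof (intro conjI)
  have n1: "n \<ge> 1" using assms by simp
  show "msg_bounded 6 n (Alg n)"
    unfolding msg_bounded_def using wd_pos[OF assms] by (simp add: length_enc wd_def[symmetric])
  show "clique_correct k n (Alg n)"
    unfolding clique_correct_def
  proof (intro allI impI)
    fix E i v Q b
    assume vt: "valid_topology n E" and i: "1 \<le> i" and vq: "valid_query k n v Q"
      and a: "answer (Alg n) (run (Alg n) n E i v) Q = Some b"
    obtain t where t: "i = Suc t" using i by (cases i) auto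
    obtain hs where hs: "run (Alg n) n E i v = [v, to_nat hs]" "view n hs = S n E i v"
      using sim[OF n1] by blast
    have a': "ans v (S n E (Suc t) v) Q = Some b" using a hs t by simp
    then have ok: "lok (S n E (Suc t) v)" by (simp add: ans_def split: if_splits)
    have "v \<in> Q" using vq by (simp add: valid_query_def)
    from ans_correct[OF vt this ok] a' t show "b = is_clique (E i) Q" by simp
  qed
  show "amortized_bound 2 k n (Alg n)"
    unfolding amortized_bound_def
  proof (intro allI impI)
    fix E i
    assume vt: "valid_topology n E"
    have P: "\<exists>y<n. Qp n E t y \<noteq> {}" if "inconsistent_round k n (Alg n) E (Suc t)" for t
    proof -
      note inc = that
      obtain v Q where vq: "valid_query k n v Q" and a: "answer (Alg n) (run (Alg n) n E (Suc t) v) Q = None"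
        using inc unfolding inconsistent_round_def by blast
      obtain hs where hs: "run (Alg n) n E (Suc t) v = [v, to_nat hs]" "view n hs = S n E (Suc t) v"
        using sim[OF n1] by blast
      have "ans v (S n E (Suc t) v) Q = None" using a hs by simp
      then have "\<not> lok (S n E (Suc t) v)" by (simp add: ans_def split: if_splits)
      moreover have "v < n" using vq by (simp add: valid_query_def)
      ultimately show ?thesis by (rule not_ok[OF vt])
    qed
    have "card {j\<in>{1..i}. inconsistent_round k n (Alg n) E j} + Phi n E i \<le> 2 * num_changes E i"
      by (rule amort[OF vt P])
    then have "card {j\<in>{1..i}. inconsistent_round k n (Alg n) E j} \<le> 2 * num_changes E i" by linarith
    then show "real (card {j\<in>{1..i}. inconsistent_round k n (Alg n) E j}) \<le> 2 * real (num_changes E i)"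
      by linarith
  qed
qed

theorem corollary2:
  fixes k :: nat
  assumes "k \<ge> 3"
  shows "\<exists>(c::real) (B::nat). \<forall>n. \<exists>A. msg_bounded B n A \<and> clique_correct k n A
            \<and> amortized_bound c k n A"
proof -
  have "\<forall>n. \<exists>A. msg_bounded 6 n A \<and> clique_correct k n A \<and> amortized_bound 2 k n A"
  proof
    fix n :: nat
    show "\<exists>A. msg_bounded 6 n A \<and> clique_correct k n A \<and> amortized_bound 2 k n A"
    proof (cases "n \<le> 1")
      case True then show ?thesis using small_n[OF assms] by blast
    next
      case False then show ?thesis using big_n[of n] by auto
    qed
  qed
  then show ?thesis by blast
qed

end
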